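(* Let $I_1=\{m+ni: m\in\{1,2,\ldots\},n\in\mathbb Z\}$ and $I_2=\{m+ni: m\in\{1,2,\ldots\},\ n\in\{0,1,2,\ldots\}\}$, let $D=\{z\in\mathbb C:|z-1/2|\le 1/2\}$, $\theta_b(z)=1/(z+b)$, and let $s>1$ and $R>\sqrt2$. Let $v_s$ be the strictly positive eigenvector of the operator $(L_sv)(z)=\sum_{b\in\mathcal B}|z+b|^{-2s}v(\theta_b(z))$ on $C_{\mathbb R}(D)$ with $\mathcal B=I_1$. Then for all $z\in D$, $$\sum_{b\in I_1,|b|>R}\frac{v_s(\theta_b(z))}{|z+b|^{2s}}\le \exp\Big(\frac{2s}{\sqrt{R^2-R}}\Big)\Big(\frac{R}{R-1}\Big)^s\left[\frac{1}{2s-1}\Big(\frac{1}{R-1}\Big)^{2s-1}+\frac{\pi}{2}\cdot\frac{1}{s-1}\Big(\frac{1}{R-\sqrt2}\Big)^{2s-2}\right]v_s(0).$$ Similarly, if $v_s$ is the strictly positive eigenvector of the corresponding operator with $\mathcal B=I_2$, then for all $z\in D$, $$\sum_{b\in I_2,|b|>R}\frac{v_s(\theta_b(z))}{|z+b|^{2s}}\le \exp\Big(\frac{2s}{\sqrt{R^2-R}}\Big)\Big(\frac{R}{R-1}\Big)^s\left[\frac{1}{2s-1}\Big(\frac{1}{R-1}\Big)^{2s-1}+\frac{\pi}{4}\cdot\frac{1}{s-1}\Big(\frac{1}{R-\sqrt2}\Big)^{2s-2}\right]v_s(0).$$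
   Context: $C_{\mathbb R}(D)$ is the space of real continuous functions on $D$. For $s>1$ and $\mathcal B=I_1$ or $I_2$ the operator $L_s$ is a bounded linear operator on $C_{\mathbb R}(D)$ having a strictly positive eigenvector $v_s$ (unique up to positive multiples) with eigenvalue equal to its spectral radius. *)

theory Defs
  imports "HOL-Analysis.Analysis"
begin

definition I1 :: "complex set" where
  "I1 = {of_nat m + of_int n * \<i> | m n. m \<ge> 1}"

definition I2 :: "complex set" where
  "I2 = {of_nat m + of_nat n * \<i> | m n. m \<ge> 1}"

definition Ddisk :: "complex set" where
  "Ddisk = cball (1/2) (1/2)"

definition Lop :: "real \<Rightarrow> complex set \<Rightarrow> (complex \<Rightarrow> real) \<Rightarrow> complex \<Rightarrow> real" where
  "Lop s B v z = (\<Sum>\<^sub>\<infinity> b\<in>B. v (1 / (z + b)) / cmod (z + b) powr (2 * s))"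

definition Lop_pow_norm :: "real \<Rightarrow> complex set \<Rightarrow> nat \<Rightarrow> real" where
  "Lop_pow_norm s B n =
     Sup {Sup ((\<lambda>z. \<bar>(Lop s B ^^ n) v z\<bar>) ` Ddisk) | v.
            continuous_on Ddisk v \<and> (\<forall>z\<in>Ddisk. \<bar>v z\<bar> \<le> 1)}"

text \<open>Spectral radius of L_s on C_R(D), via the Gelfand formula lim ||L^n||^(1/n).\<close>
definition spec_rad :: "real \<Rightarrow> complex set \<Rightarrow> real" where
  "spec_rad s B = lim (\<lambda>n. root n (Lop_pow_norm s B n))"

definition pos_eigvec :: "real \<Rightarrow> complex set \<Rightarrow> (complex \<Rightarrow> real) \<Rightarrow> bool" where
  "pos_eigvec s B v \<longleftrightarrow> continuous_on Ddisk v \<and> (\<forall>z\<in>Ddisk. v z > 0) \<and>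
     (\<forall>z\<in>Ddisk. Lop s B v z = spec_rad s B * v z)"

end

theory Submission
  imports Defs
begin

lemma powr_convex_step:
  fixes a b p :: real
  assumes "0 < a" "a \<le> b" "0 < p"
  shows "p * (b - a) * b powr (- p - 1) \<le> a powr (- p) - b powr (- p)"
proof (cases "a = b")
  case True then show ?thesis by simp
next
  case False
  with assms have ab: "a < b" by simp
  have "\<And>x. a \<le> x \<Longrightarrow> x \<le> b \<Longrightarrow> ((\<lambda>x. x powr (- p)) has_real_derivative (- p) * x powr (- p - 1)) (at x)"
    using assms by (auto intro!: derivative_eq_intros)
  from MVT2[OF ab this] obtain z where z: "a < z" "z < b"
    "b powr (- p) - a powr (- p) = (b - a) * ((- p) * z powr (- p - 1))" by blast
  have "b powr (- p - 1) \<le> z powr (- p - 1)"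
    using z assms by (intro powr_mono2') auto
  then have "p * (b - a) * b powr (- p - 1) \<le> p * (b - a) * z powr (- p - 1)"
    using ab assms by (intro mult_left_mono) auto
  also have "\<dots> = a powr (- p) - b powr (- p)" using z(3) by (simp add: algebra_simps)
  finally show ?thesis .
qed

lemma telescope_bound:
  fixes a h q :: real
  assumes "0 < a" "0 < h" "1 < q"
  shows "(\<Sum>k=1..N. (a + h * real k) powr (- q)) \<le> (a powr (1 - q) - (a + h * real N) powr (1 - q)) / (h * (q - 1))"
proof (induction N)
  case 0 then show ?case by simp
next
  case (Suc N)
  let ?x = "a + h * real N" and ?y = "a + h * real (Suc N)"
  have step: "(q - 1) * (?y - ?x) * ?y powr (- (q - 1) - 1) \<le> ?x powr (- (q - 1)) - ?y powr (- (q - 1))"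
    using assms by (intro powr_convex_step) (auto intro: add_pos_nonneg)
  have yx: "?y - ?x = h" by (simp add: algebra_simps)
  have "?y powr (- q) \<le> (?x powr (1 - q) - ?y powr (1 - q)) / (h * (q - 1))"
    using step assms unfolding yx by (simp add: field_simps)
  with Suc show ?case
    by (simp add: diff_divide_distrib)
qed

lemma telescope_bound':
  fixes a h q :: real
  assumes "0 < a" "0 < h" "1 < q"
  shows "(\<Sum>k=1..N. (a + h * real k) powr (- q)) \<le> a powr (1 - q) / (h * (q - 1))"
proof -
  have "0 \<le> (a + h * real N) powr (1 - q) / (h * (q - 1))" using assms by simp
  then show ?thesis using telescope_bound[OF assms, of N] by (simp add: diff_divide_distrib)
qed

lemma sorted_sum_bound:
  fixes w :: "'a \<Rightarrow> real" and a h q :: real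
  assumes "finite F" "0 < a" "0 < h" "0 < q"
    and "\<And>b. b \<in> F \<Longrightarrow> a + h * real (card {c\<in>F. w c \<le> w b}) \<le> w b"
  shows "(\<Sum>b\<in>F. w b powr (- q)) \<le> (\<Sum>k=1..card F. (a + h * real k) powr (- q))"
  using assms
proof (induction "card F" arbitrary: F)
  case 0
  then show ?case by simp
next
  case (Suc n)
  then have ne: "F \<noteq> {}" by auto
  obtain b0 where b0: "b0 \<in> F" "w b0 = Max (w ` F)"
  proof -
    have "Max (w ` F) \<in> w ` F" using Suc.prems(1) ne by (intro Max_in) auto
    then show ?thesis using that by auto
  qed
  have maxb: "\<And>c. c \<in> F \<Longrightarrow> w c \<le> w b0" using b0 Suc.prems by simp
  have "{c\<in>F. w c \<le> w b0} = F" using maxb by auto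
  then have hb0: "a + h * real (card F) \<le> w b0" using Suc.prems(5)[OF b0(1)] by simp
  let ?F = "F - {b0}"
  have cF: "card ?F = n" using Suc.hyps(2) b0 Suc.prems by simp
  have hyp': "a + h * real (card {c\<in>?F. w c \<le> w b}) \<le> w b" if "b \<in> ?F" for b
  proof -
    have "card {c\<in>?F. w c \<le> w b} \<le> card {c\<in>F. w c \<le> w b}"
      using Suc.prems(1) by (intro card_mono) auto
    then show ?thesis using Suc.prems(5)[of b] that assms(3)
      by (smt (verit, ccfv_SIG) DiffD1 mult_left_mono of_nat_mono)
  qed
  have IH: "(\<Sum>b\<in>?F. w b powr (- q)) \<le> (\<Sum>k=1..n. (a + h * real k) powr (- q))"
    using Suc.hyps(1)[OF cF[symmetric]] Suc.prems hyp' cF by auto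
  have t0: "w b0 powr (- q) \<le> (a + h * real (Suc n)) powr (- q)"
    using hb0 Suc.hyps(2) Suc.prems by (intro powr_mono2') (auto intro: add_pos_nonneg)
  have "(\<Sum>b\<in>F. w b powr (- q)) = w b0 powr (- q) + (\<Sum>b\<in>?F. w b powr (- q))"
    using Suc.prems(1) b0(1) by (simp add: sum.remove)
  also have "\<dots> \<le> (a + h * real (Suc n)) powr (- q) + (\<Sum>k=1..n. (a + h * real k) powr (- q))"
    using t0 IH by simp
  also have "\<dots> = (\<Sum>k=1..Suc n. (a + h * real k) powr (- q))" by simp
  finally show ?case using Suc.hyps(2) by simp
qed



definition Quad :: "real \<Rightarrow> complex set" where
  "Quad R = {b. \<exists>m n::nat. 1 \<le> m \<and> 1 \<le> n \<and> b = Complex (real m) (real n) \<and> R < cmod b}"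

definition ubox :: "complex \<Rightarrow> complex set" where
  "ubox t = box (Complex (Re t - 1) (Im t - 1)) t"

lemma mem_ubox: "x \<in> ubox t \<longleftrightarrow> Re t - 1 < Re x \<and> Re x < Re t \<and> Im t - 1 < Im x \<and> Im x < Im t"
  unfolding ubox_def by (auto simp: mem_box Basis_complex_def)

lemma measure_ubox: "measure lborel (ubox t) = 1"
  unfolding ubox_def by (subst measure_lborel_box) (auto simp: Basis_complex_def)

lemma sq_lt1: "0 \<le> (d::real) \<Longrightarrow> d < 1 \<Longrightarrow> d^2 < 1"
  by (simp add: power2_eq_square) (metis mult_strict_mono' mult_1 zero_le_one)

lemma ubox_norm_bounds:
  fixes c x :: complex
  assumes "1 \<le> Re c" "1 \<le> Im c" "Re c - 1 < \<bar>Re x\<bar>" "\<bar>Re x\<bar> < Re c"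
    "Im c - 1 < \<bar>Im x\<bar>" "\<bar>Im x\<bar> < Im c"
  shows "cmod x < cmod c" "cmod c - sqrt 2 < cmod x"
proof -
  have "\<bar>Re x\<bar>^2 < (Re c)^2" using assms by (intro power_strict_mono) auto
  then have "(Re x)^2 < (Re c)^2" by simp
  moreover have "\<bar>Im x\<bar>^2 < (Im c)^2" using assms by (intro power_strict_mono) auto
  then have "(Im x)^2 < (Im c)^2" by simp
  ultimately show "cmod x < cmod c" unfolding cmod_def by (intro real_sqrt_less_mono) auto
next
  define x' where "x' = Complex \<bar>Re x\<bar> \<bar>Im x\<bar>"
  have nx: "cmod x' = cmod x" unfolding x'_def cmod_def by simp
  have d1: "(Re c - \<bar>Re x\<bar>)^2 < 1" using assms using assms by (intro sq_lt1) auto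
  have d2: "(Im c - \<bar>Im x\<bar>)^2 < 1" using assms using assms by (intro sq_lt1) auto
  have "cmod (c - x') = sqrt ((Re c - \<bar>Re x\<bar>)^2 + (Im c - \<bar>Im x\<bar>)^2)"
    unfolding x'_def cmod_def by simp
  also have "\<dots> < sqrt 2" using d1 d2 by (intro real_sqrt_less_mono) auto
  finally have "cmod (c - x') < sqrt 2" .
  moreover have "cmod c \<le> cmod x' + cmod (c - x')" using norm_triangle_ineq[of x' "c - x'"] by simp
  ultimately show "cmod c - sqrt 2 < cmod x" using nx by linarith
qed

definition gref :: "nat \<Rightarrow> complex \<Rightarrow> complex" where
  "gref j c = Complex (if odd j then 1 - Re c else Re c) (if j \<ge> 2 then 1 - Im c else Im c)"

lemma Re_gref: "Re (gref j c) = (if odd j then 1 - Re c else Re c)" unfolding gref_def by simp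
lemma Im_gref: "Im (gref j c) = (if j \<ge> 2 then 1 - Im c else Im c)" unfolding gref_def by simp

lemma Quad_finite_le: "finite {c\<in>Quad R. cmod c \<le> r}"
proof -
  let ?N = "nat \<lceil>r\<rceil>"
  have "{c\<in>Quad R. cmod c \<le> r} \<subseteq> (\<lambda>(m,n). Complex (real m) (real n)) ` ({0..?N} \<times> {0..?N})"
  proof
    fix c assume c: "c \<in> {c\<in>Quad R. cmod c \<le> r}"
    then obtain m n :: nat where mn: "c = Complex (real m) (real n)" and cr: "cmod c \<le> r"
      unfolding Quad_def by auto
    have "real m \<le> cmod c" using abs_Re_le_cmod[of c] mn by simp
    then have "m \<le> ?N" using cr by linarith
    moreover have "real n \<le> cmod c" using abs_Im_le_cmod[of c] mn by simp
    then have "n \<le> ?N" using cr by linarith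
    ultimately show "c \<in> (\<lambda>(m,n). Complex (real m) (real n)) ` ({0..?N} \<times> {0..?N})"
      using mn by force
  qed
  then show ?thesis by (rule finite_subset) auto
qed

lemma quad_count:
  assumes R: "sqrt 2 < R" and rR: "R \<le> r"
  shows "4 * real (card {c\<in>Quad R. cmod c \<le> r}) \<le> pi * (r^2 - (R - sqrt 2)^2)"
proof -
  define C where "C = {c\<in>Quad R. cmod c \<le> r}"
  define \<rho> where "\<rho> = R - sqrt 2"
  have s2: "0 < sqrt (2::real)" by simp
  have \<rho>: "0 < \<rho>" "\<rho> < r" unfolding \<rho>_def using R rR s2 by linarith+
  have finC: "finite C" unfolding C_def by (rule Quad_finite_le)
  have Cprop: "1 \<le> Re c \<and> 1 \<le> Im c \<and> Re c \<in> \<int> \<and> Im c \<in> \<int> \<and> R < cmod c \<and> cmod c \<le> r" if "c \<in> C" for c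
    using that unfolding C_def Quad_def by auto
  define I where "I = C \<times> {0..<4::nat}"
  have finI: "finite I" unfolding I_def using finC by auto
  have cardI: "card I = 4 * card C" unfolding I_def by (simp add: card_cartesian_product)
  define F where "F = (\<lambda>(c,j). ubox (gref j c))"
  have gInt: "Re (gref j c) \<in> \<int> \<and> Im (gref j c) \<in> \<int>" if "c \<in> C" for c j
    using Cprop[OF that] unfolding gref_def by auto
  have ginj: "gref j c = gref j' c' \<Longrightarrow> c \<in> C \<Longrightarrow> c' \<in> C \<Longrightarrow> j < 4 \<Longrightarrow> j' < 4 \<Longrightarrow> c = c' \<and> j = j'" for c c' j j'
  proof -
    assume eq: "gref j c = gref j' c'" and c: "c \<in> C" "c' \<in> C" and j: "j < 4" "j' < 4"
    have r1: "(if odd j then 1 - Re c else Re c) = (if odd j' then 1 - Re c' else Re c')"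
      using arg_cong[OF eq, of Re] unfolding Re_gref .
    have r2: "(if j \<ge> 2 then 1 - Im c else Im c) = (if j' \<ge> 2 then 1 - Im c' else Im c')"
      using arg_cong[OF eq, of Im] unfolding Im_gref .
    have o: "odd j \<longleftrightarrow> odd j'" using r1 Cprop[OF c(1)] Cprop[OF c(2)] by (auto split: if_splits)
    have t: "j \<ge> 2 \<longleftrightarrow> j' \<ge> 2" using r2 Cprop[OF c(1)] Cprop[OF c(2)] by (auto split: if_splits)
    have "Re c = Re c'" "Im c = Im c'" using r1 r2 o t by (auto split: if_splits)
    then have "c = c'" by (simp add: complex_eq_iff)
    moreover have "j = j'" using o t j by presburger
    ultimately show ?thesis by simp
  qed
  have disj: "pairwise (\<lambda>i i'. disjnt (F i) (F i')) I"
    unfolding pairwise_def disjnt_def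
  proof (intro ballI impI equals0I)
    fix i i' x assume i: "i \<in> I" "i' \<in> I" "i \<noteq> i'" and x: "x \<in> F i \<inter> F i'"
    obtain c j where cj: "i = (c, j)" by (cases i)
    obtain c' j' where cj': "i' = (c', j')" by (cases i')
    have H: "c \<in> C" "j < 4" "c' \<in> C" "j' < 4" "c = c' \<longrightarrow> j \<noteq> j'"
      using i unfolding cj cj' I_def by auto
    have X: "x \<in> ubox (gref j c)" "x \<in> ubox (gref j' c')" using x unfolding cj cj' F_def by auto
    let ?t = "gref j c" and ?t' = "gref j' c'"
    have "Re ?t = Re ?t'"
      using X gInt[OF H(1)] gInt[OF H(3)] Ints_eq_abs_less1[of "Re ?t" "Re ?t'"]
      unfolding mem_ubox by auto
    moreover have "Im ?t = Im ?t'"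
      using X gInt[OF H(1)] gInt[OF H(3)] Ints_eq_abs_less1[of "Im ?t" "Im ?t'"]
      unfolding mem_ubox by auto
    ultimately have "?t = ?t'" by (simp add: complex_eq_iff)
    then show False using ginj H by blast
  qed
  have meas: "measure lborel (\<Union> (F ` I)) = real (card I)"
  proof -
    have "measure lborel (\<Union> (F ` I)) = (\<Sum>i\<in>I. measure lborel (F i))"
      by (rule measure_UNION'[OF finI _ disj]) (simp add: F_def ubox_def split: prod.splits)
    also have "\<dots> = (\<Sum>i\<in>I. 1)"
      by (rule sum.cong) (simp_all add: F_def measure_ubox split: prod.splits)
    finally show ?thesis by simp
  qed
  have sub: "\<Union> (F ` I) \<subseteq> ball 0 r - cball 0 \<rho>"
  proof
    fix x assume "x \<in> \<Union> (F ` I)"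
    then obtain i where i: "i \<in> I" "x \<in> F i" by auto
    obtain c j where cj: "i = (c, j)" by (cases i)
    have H: "(c, j) \<in> I" "x \<in> F (c, j)" using i cj by auto
    have c: "c \<in> C" "j < 4" using H(1) unfolding I_def by auto
    note cp = Cprop[OF c(1)]
    have bx: "Re c - 1 < \<bar>Re x\<bar> \<and> \<bar>Re x\<bar> < Re c \<and> Im c - 1 < \<bar>Im x\<bar> \<and> \<bar>Im x\<bar> < Im c"
    proof -
      have "x \<in> ubox (gref j c)" using H(2) unfolding F_def by simp
      then have "Re (gref j c) - 1 < Re x \<and> Re x < Re (gref j c) \<and> Im (gref j c) - 1 < Im x \<and> Im x < Im (gref j c)"
        unfolding mem_ubox .
      then show ?thesis unfolding Re_gref Im_gref using cp by (auto split: if_splits)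
    qed
    have "cmod x < cmod c" "cmod c - sqrt 2 < cmod x"
      using ubox_norm_bounds[of c x] cp bx by auto
    then have "cmod x < r \<and> \<rho> < cmod x" using cp unfolding \<rho>_def by auto
    then show "x \<in> ball 0 r - cball 0 \<rho>" by (simp add: dist_norm)
  qed
  have ballf: "ball (0::complex) r \<in> fmeasurable lborel"
    using emeasure_lborel_ball_finite[of "0::complex" r] by (intro fmeasurableI) auto
  have "real (card I) \<le> measure lborel (ball 0 r - cball (0::complex) \<rho>)"
    unfolding meas[symmetric]
  proof (rule measure_mono_fmeasurable[OF sub])
    show "\<Union> (F ` I) \<in> sets lborel" using finI by (auto simp: F_def ubox_def split: prod.splits)
    show "ball 0 r - cball (0::complex) \<rho> \<in> fmeasurable lborel"
      using ballf fmeasurable_compact[of "cball (0::complex) \<rho>"] by (intro fmeasurable.Diff) auto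
  qed
  also have "\<dots> = measure lborel (ball (0::complex) r) - measure lborel (cball (0::complex) \<rho>)"
    using \<rho> by (intro measurable_measure_Diff ballf) auto
  also have "\<dots> = pi * r^2 - pi * \<rho>^2"
    using \<rho> by (simp add: content_ball content_cball unit_ball_vol_2)
  finally show ?thesis using cardI unfolding C_def \<rho>_def by (simp add: algebra_simps)
qed



lemma fin_bound_infsum:
  fixes f :: "'a \<Rightarrow> real"
  assumes "\<And>x. x \<in> A \<Longrightarrow> 0 \<le> f x" "\<And>F. finite F \<Longrightarrow> F \<subseteq> A \<Longrightarrow> sum f F \<le> B"
  shows "f summable_on A" "infsum f A \<le> B"
proof -
  show sm: "f summable_on A"
    using assms by (intro nonneg_bdd_above_summable_on) (auto simp: bdd_above_def)
  show "infsum f A \<le> B" using assms by (intro infsum_le_finite_sums[OF sm]) auto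
qed

lemma quad_sum:
  assumes R: "sqrt 2 < R" and s: "1 < s"
  shows "(\<lambda>b. cmod b powr (- (2 * s))) summable_on Quad R"
    "(\<Sum>\<^sub>\<infinity>b\<in>Quad R. cmod b powr (- (2 * s))) \<le> pi / 4 * (1 / (s - 1)) * (1 / (R - sqrt 2)) powr (2 * s - 2)"
proof -
  define \<rho> where "\<rho> = R - sqrt 2"
  have s2: "0 < sqrt (2::real)" by simp
  have \<rho>: "0 < \<rho>" unfolding \<rho>_def using R by linarith
  have key: "sum (\<lambda>b. cmod b powr (- (2 * s))) F \<le> pi / 4 * (1 / (s - 1)) * (1 / \<rho>) powr (2 * s - 2)"
    if F: "finite F" "F \<subseteq> Quad R" for F
  proof -
    have pos: "0 < cmod b" if "b \<in> F" for b
      using that F R s2 unfolding Quad_def by (smt (verit) mem_Collect_eq subsetD)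
    have "sum (\<lambda>b. cmod b powr (- (2 * s))) F = (\<Sum>b\<in>F. (cmod b ^ 2) powr (- s))"
    proof (rule sum.cong)
      fix b assume "b \<in> F"
      show "cmod b powr (- (2 * s)) = (cmod b ^ 2) powr (- s)"
      proof -
        have "cmod b ^ 2 = cmod b powr 2" using pos[OF \<open>b \<in> F\<close>] by (simp add: powr_realpow)
        then have "(cmod b ^ 2) powr (-s) = cmod b powr (2 * (-s))" by (simp only: powr_powr)
        then show ?thesis by simp
      qed
    qed simp
    also have "\<dots> \<le> (\<Sum>k=1..card F. (\<rho>^2 + (4 / pi) * real k) powr (- s))"
    proof (rule sorted_sum_bound[OF F(1)])
      show "0 < \<rho>^2" using \<rho> by simp
      show "0 < 4 / pi" by simp
      show "0 < s" using s by simp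
      fix b assume b: "b \<in> F"
      have bR: "R < cmod b" using b F unfolding Quad_def by auto
      have "card {c\<in>F. cmod c ^ 2 \<le> cmod b ^ 2} \<le> card {c\<in>Quad R. cmod c \<le> cmod b}"
        using F by (intro card_mono[OF Quad_finite_le]) (auto simp: power_mono_iff)
      then have "4 * real (card {c\<in>F. cmod c ^ 2 \<le> cmod b ^ 2}) \<le> pi * ((cmod b)^2 - \<rho>^2)"
        using quad_count[OF R, of "cmod b"] bR unfolding \<rho>_def by linarith
      then show "\<rho>^2 + 4 / pi * real (card {c\<in>F. cmod c ^ 2 \<le> cmod b ^ 2}) \<le> cmod b ^ 2"
        by (simp add: field_simps)
    qed
    also have "\<dots> \<le> (\<rho>^2) powr (1 - s) / ((4 / pi) * (s - 1))"
      using \<rho> s by (intro telescope_bound') auto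
    also have "\<dots> = pi / 4 * (1 / (s - 1)) * (1 / \<rho>) powr (2 * s - 2)"
    proof -
      have "(\<rho>^2) powr (1 - s) = (1 / \<rho>) powr (2 * s - 2)"
        proof -
        have "\<rho>^2 = \<rho> powr 2" using \<rho> by (simp add: powr_realpow)
        then have "(\<rho>^2) powr (1 - s) = \<rho> powr (2 * (1 - s))" by (simp only: powr_powr)
        also have "\<dots> = 1 / \<rho> powr (2 * s - 2)"
          by (simp only: powr_minus_divide[symmetric]) (simp add: algebra_simps)
        also have "\<dots> = (1 / \<rho>) powr (2 * s - 2)" using \<rho> by (simp add: powr_divide)
        finally show ?thesis .
      qed
      then show ?thesis by (simp add: field_simps)
    qed
    finally show ?thesis .
  qed
  show "(\<lambda>b. cmod b powr (- (2 * s))) summable_on Quad R"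
    by (rule fin_bound_infsum(1)[OF _ key]) auto
  show "(\<Sum>\<^sub>\<infinity>b\<in>Quad R. cmod b powr (- (2 * s))) \<le> pi / 4 * (1 / (s - 1)) * (1 / (R - sqrt 2)) powr (2 * s - 2)"
    using fin_bound_infsum(2)[OF _ key] unfolding \<rho>_def by auto
qed



definition Axis :: "real \<Rightarrow> complex set" where
  "Axis R = {b. \<exists>m::nat. 1 \<le> m \<and> b = Complex (real m) 0 \<and> R < cmod b}"

lemma cmod_axis [simp]: "cmod (Complex (real m) 0) = real m"
  by (simp add: cmod_def)

lemma axis_count:
  assumes R: "1 < R" and b: "b \<in> Axis R"
  shows "R - 1 + real (card {c\<in>Axis R. cmod c \<le> cmod b}) \<le> cmod b"
proof -
  obtain M :: nat where M: "1 \<le> M" "b = Complex (real M) 0" "R < real M"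
    using b unfolding Axis_def by force
  define L where "L = nat \<lfloor>R\<rfloor>"
  have L: "real L \<le> R" "R < real L + 1" using R unfolding L_def by linarith+
  have LM: "L + 1 \<le> M" using L M by linarith
  have "{c\<in>Axis R. cmod c \<le> cmod b} \<subseteq> (\<lambda>j. Complex (real j) 0) ` {L+1..M}"
  proof
    fix c assume c: "c \<in> {c\<in>Axis R. cmod c \<le> cmod b}"
    then obtain j :: nat where j: "c = Complex (real j) 0" "R < real j" "real j \<le> real M"
      unfolding Axis_def using M by force
    have "j \<in> {L+1..M}" using j L by auto
    then show "c \<in> (\<lambda>j. Complex (real j) 0) ` {L+1..M}" using j by auto
  qed
  then have "card {c\<in>Axis R. cmod c \<le> cmod b} \<le> card ((\<lambda>j. Complex (real j) 0) ` {L+1..M})"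
    by (intro card_mono) auto
  also have "\<dots> \<le> card {L+1..M}" by (rule card_image_le) simp
  also have "\<dots> = M - L" by simp
  finally have "real (card {c\<in>Axis R. cmod c \<le> cmod b}) \<le> real M - real L" using LM by linarith
  then show ?thesis using L M by simp
qed

lemma axis_sum:
  assumes R: "1 < R" and s: "1 < s"
  shows "(\<lambda>b. cmod b powr (- (2 * s))) summable_on Axis R"
    "(\<Sum>\<^sub>\<infinity>b\<in>Axis R. cmod b powr (- (2 * s))) \<le> 1 / (2 * s - 1) * (1 / (R - 1)) powr (2 * s - 1)"
proof -
  have key: "sum (\<lambda>b. cmod b powr (- (2 * s))) F \<le> 1 / (2 * s - 1) * (1 / (R - 1)) powr (2 * s - 1)"
    if F: "finite F" "F \<subseteq> Axis R" for F
  proof -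
    have "sum (\<lambda>b. cmod b powr (- (2 * s))) F \<le> (\<Sum>k=1..card F. ((R - 1) + 1 * real k) powr (- (2 * s)))"
    proof (rule sorted_sum_bound[OF F(1)])
      show "0 < R - 1" "0 < (1::real)" "0 < 2 * s" using R s by auto
      fix b assume b: "b \<in> F"
      have "card {c\<in>F. cmod c \<le> cmod b} \<le> card {c\<in>Axis R. cmod c \<le> cmod b}"
      proof (rule card_mono)
        have "{c\<in>Axis R. cmod c \<le> cmod b} \<subseteq> (\<lambda>j. Complex (real j) 0) ` {0..nat \<lceil>cmod b\<rceil>}"
        proof
          fix c assume c: "c \<in> {c\<in>Axis R. cmod c \<le> cmod b}"
          then obtain j :: nat where j: "c = Complex (real j) 0" "real j \<le> cmod b"
            unfolding Axis_def by force
          then have "j \<le> nat \<lceil>cmod b\<rceil>" by linarith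
          then show "c \<in> (\<lambda>j. Complex (real j) 0) ` {0..nat \<lceil>cmod b\<rceil>}" using j by auto
        qed
        then show "finite {c\<in>Axis R. cmod c \<le> cmod b}" by (rule finite_subset) auto
      qed (use F in auto)
      then show "R - 1 + 1 * real (card {c\<in>F. cmod c \<le> cmod b}) \<le> cmod b"
        using axis_count[OF R, of b] b F by auto
    qed
    also have "\<dots> \<le> (R - 1) powr (1 - 2 * s) / (1 * (2 * s - 1))"
      using R s by (intro telescope_bound') auto
    also have "\<dots> = 1 / (2 * s - 1) * (1 / (R - 1)) powr (2 * s - 1)"
    proof -
      have "(R - 1) powr (1 - 2 * s) = 1 / (R - 1) powr (2 * s - 1)"
        by (simp only: powr_minus_divide[symmetric]) (simp add: algebra_simps)
      also have "\<dots> = (1 / (R - 1)) powr (2 * s - 1)" using R by (simp add: powr_divide)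
      finally show ?thesis by simp
    qed
    finally show ?thesis .
  qed
  show "(\<lambda>b. cmod b powr (- (2 * s))) summable_on Axis R"
    by (rule fin_bound_infsum(1)[OF _ key]) auto
  show "(\<Sum>\<^sub>\<infinity>b\<in>Axis R. cmod b powr (- (2 * s))) \<le> 1 / (2 * s - 1) * (1 / (R - 1)) powr (2 * s - 1)"
    using fin_bound_infsum(2)[OF _ key] by auto
qed



lemma Ddisk_iff: "z \<in> Ddisk \<longleftrightarrow> cmod (z - 1/2) \<le> 1/2"
  unfolding Ddisk_def by (simp add: dist_norm norm_minus_commute)

lemma Ddisk_sq: assumes "z \<in> Ddisk" shows "(cmod z)^2 \<le> Re z"
proof -
  have "(cmod (z - 1/2))^2 \<le> (1/2)^2" using assms unfolding Ddisk_iff by (intro power_mono) auto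
  then show ?thesis unfolding cmod_power2 by (simp add: power2_eq_square algebra_simps)
qed

lemma Ddisk_Re: "z \<in> Ddisk \<Longrightarrow> 0 \<le> Re z"
  using Ddisk_sq[of z] by (smt (verit) zero_le_power2)

lemma Ddisk_norm: assumes "z \<in> Ddisk" shows "cmod z \<le> 1"
proof -
  have "(cmod z)^2 \<le> cmod z" using Ddisk_sq[OF assms] abs_Re_le_cmod[of z] by linarith
  show ?thesis
  proof (rule ccontr)
    assume "\<not> cmod z \<le> 1"
    then have "cmod z * 1 < cmod z * cmod z" by (intro mult_strict_left_mono) auto
    then show False using \<open>(cmod z)^2 \<le> cmod z\<close> by (simp add: power2_eq_square)
  qed
qed

lemma Ddisk_0: "0 \<in> Ddisk" by (simp add: Ddisk_iff)

lemma Ddisk_compact: "compact Ddisk" unfolding Ddisk_def by simp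

lemma Ddisk_diam: "p \<in> Ddisk \<Longrightarrow> q \<in> Ddisk \<Longrightarrow> cmod (p - q) \<le> 1"
  unfolding Ddisk_iff using norm_triangle_ineq4[of "p - 1/2" "q - 1/2"] by simp

lemma inv_Ddisk: assumes "1 \<le> Re w" shows "1 / w \<in> Ddisk"
proof -
  have w0: "w \<noteq> 0" using assms by auto
  have "1 / w - 1/2 = (2 - w) / (2 * w)" using w0 by (simp add: field_simps)
  then have eq: "cmod (1 / w - 1/2) = cmod (2 - w) / (2 * cmod w)" by (simp add: norm_divide norm_mult)
  have "(cmod (2 - w))^2 \<le> (cmod w)^2" unfolding cmod_power2 using assms
    by (simp add: power2_eq_square algebra_simps)
  then have "cmod (2 - w) \<le> cmod w" by (simp add: power_mono_iff)
  then show ?thesis unfolding Ddisk_iff eq using w0 by (simp add: field_simps)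
qed

lemma Re_mult_Ddisk: assumes "u \<in> Ddisk" shows "(Re w - cmod w) / 2 \<le> Re (u * w)"
proof -
  define e where "e = u - 1/2"
  have e: "cmod e \<le> 1/2" using assms unfolding Ddisk_iff e_def .
  have "u * w = w / 2 + e * w" unfolding e_def by (simp add: algebra_simps)
  then have "Re (u * w) = Re w / 2 + Re (e * w)" by simp
  moreover have "- (cmod e * cmod w) \<le> Re (e * w)"
    using abs_Re_le_cmod[of "e * w"] by (simp add: norm_mult)
  moreover have "cmod e * cmod w \<le> 1/2 * cmod w" using e by (intro mult_right_mono) auto
  ultimately have "Re w / 2 - cmod w / 2 \<le> Re (u * w)" by linarith
  then show ?thesis by (simp add: diff_divide_distrib)
qed

lemma one_plus_Ddisk: assumes "u \<in> Ddisk" "w \<in> Ddisk"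
  shows "1 - cmod w / 2 \<le> cmod (1 + u * w)" "1/2 \<le> cmod (1 + u * w)"
proof -
  have "1 - cmod w / 2 \<le> Re (1 + u * w)"
    using Re_mult_Ddisk[OF assms(1), of w] Ddisk_Re[OF assms(2)] by simp
  also have "\<dots> \<le> cmod (1 + u * w)" by (rule complex_Re_le_cmod)
  finally show "1 - cmod w / 2 \<le> cmod (1 + u * w)" .
  then show "1/2 \<le> cmod (1 + u * w)" using Ddisk_norm[OF assms(2)] by linarith
qed

lemma norm_plus_b_sq:
  assumes "z \<in> Ddisk" "0 \<le> Re b"
  shows "(cmod b)^2 - cmod b \<le> (cmod (z + b))^2"
proof -
  have e1: "(cmod (z + b))^2 = (cmod z)^2 + (cmod b)^2 + 2 * Re (z * cnj b)"
    unfolding cmod_power2 by (simp add: power2_eq_square algebra_simps)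
  have e2: "(Re b - cmod b) / 2 \<le> Re (z * cnj b)" using Re_mult_Ddisk[OF assms(1), of "cnj b"] by simp
  have e3: "- cmod b \<le> 2 * Re (z * cnj b)" using e2 assms(2) by (simp add: field_simps)
  have e4: "0 \<le> (cmod z)^2" by simp
  show ?thesis unfolding e1 using e3 e4 by linarith
qed



definition psi :: "real \<Rightarrow> complex \<Rightarrow> complex \<Rightarrow> real" where
  "psi s p q = (SUP u\<in>Ddisk. (cmod (1 + u * q) / cmod (1 + u * p)) powr (2 * s))"

lemma psi_bdd:
  assumes "p \<in> Ddisk" "q \<in> Ddisk" "0 < s"
  shows "bdd_above ((\<lambda>u. (cmod (1 + u * q) / cmod (1 + u * p)) powr (2 * s)) ` Ddisk)"
proof (rule bdd_aboveI2)
  fix u assume u: "u \<in> Ddisk"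
  have "cmod (1 + u * q) \<le> 1 + cmod u * cmod q" using norm_triangle_ineq[of 1 "u * q"] by (simp add: norm_mult)
  also have "\<dots> \<le> 2" using mult_le_one[OF Ddisk_norm[OF u] norm_ge_zero Ddisk_norm[OF assms(2)]] by simp
  finally have n1: "cmod (1 + u * q) \<le> 2" .
  have n2: "1/2 \<le> cmod (1 + u * p)" using one_plus_Ddisk(2)[OF u assms(1)] .
  have "cmod (1 + u * q) / cmod (1 + u * p) \<le> 2 / (1/2)"
    by (rule frac_le) (use n1 n2 in simp_all)
  then have r4: "cmod (1 + u * q) / cmod (1 + u * p) \<le> 4" by simp
  have "(cmod (1 + u * q) / cmod (1 + u * p)) powr (2 * s) \<le> 4 powr (2 * s)"
    by (rule powr_mono2) (use r4 assms(3) in simp_all)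
  then show "(cmod (1 + u * q) / cmod (1 + u * p)) powr (2 * s) \<le> 4 powr (2 * s)" .
qed

lemma psi_upper:
  assumes "p \<in> Ddisk" "q \<in> Ddisk" "u \<in> Ddisk" "0 < s"
  shows "(cmod (1 + u * q) / cmod (1 + u * p)) powr (2 * s) \<le> psi s p q"
  unfolding psi_def by (rule cSUP_upper[OF assms(3) psi_bdd[OF assms(1,2,4)]])

lemma psi_ge1:
  assumes "p \<in> Ddisk" "q \<in> Ddisk" "0 < s"
  shows "1 \<le> psi s p q"
  using psi_upper[OF assms(1,2) Ddisk_0 assms(3)] by simp

lemma psi_least:
  assumes "\<And>u. u \<in> Ddisk \<Longrightarrow> (cmod (1 + u * q) / cmod (1 + u * p)) powr (2 * s) \<le> M"
  shows "psi s p q \<le> M"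
  unfolding psi_def using Ddisk_0 assms by (intro cSUP_least) auto

lemma psi_zero:
  assumes w: "w \<in> Ddisk" and s: "0 < s"
  shows "psi s w 0 \<le> exp (2 * s * cmod w)"
proof (rule psi_least)
  fix u assume u: "u \<in> Ddisk"
  have c1: "1 - cmod w / 2 \<le> cmod (1 + u * w)" by (rule one_plus_Ddisk(1)[OF u w])
  have c2: "1/2 \<le> cmod (1 + u * w)" by (rule one_plus_Ddisk(2)[OF u w])
  have w1: "cmod w \<le> 1" by (rule Ddisk_norm[OF w])
  have "1 + cmod w \<le> exp (cmod w)" by (rule exp_ge_add_one_self)
  moreover have "1 \<le> (1 + cmod w) * (1 - cmod w / 2)"
  proof -
    have "(1 + cmod w) * (1 - cmod w / 2) = 1 + cmod w * (1 - cmod w) / 2" by (simp add: field_simps)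
    moreover have "0 \<le> cmod w * (1 - cmod w)" using w1 by simp
    ultimately show ?thesis by simp
  qed
  moreover have "(1 + cmod w) * (1 - cmod w / 2) \<le> exp (cmod w) * cmod (1 + u * w)"
    using c1 w1 by (intro mult_mono exp_ge_add_one_self) auto
  ultimately have "1 \<le> exp (cmod w) * cmod (1 + u * w)" by linarith
  moreover have pos: "0 < cmod (1 + u * w)" using c2 by linarith
  ultimately have "1 / cmod (1 + u * w) \<le> exp (cmod w)"
    by (simp add: pos_divide_le_eq mult.commute)
  then have "(1 / cmod (1 + u * w)) powr (2 * s) \<le> exp (cmod w) powr (2 * s)"
    using s by (intro powr_mono2) auto
  then show "(cmod (1 + u * 0) / cmod (1 + u * w)) powr (2 * s) \<le> exp (2 * s * cmod w)"
    by (simp add: exp_powr_real mult_ac)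
qed

lemma psi_invariant:
  assumes b: "1 \<le> Re b" and p: "p \<in> Ddisk" and q: "q \<in> Ddisk" and s: "0 < s"
  shows "(cmod (q + b) / cmod (p + b)) powr (2 * s) * psi s (1 / (p + b)) (1 / (q + b)) \<le> psi s p q"
proof -
  have pb1: "1 \<le> Re (p + b)" using b Ddisk_Re[OF p] by simp
  then have pb: "p + b \<noteq> 0" "1 \<le> Re (p + b)" by (auto simp: complex_eq_iff)
  have qb1: "1 \<le> Re (q + b)" using b Ddisk_Re[OF q] by simp
  then have qb: "q + b \<noteq> 0" "1 \<le> Re (q + b)" by (auto simp: complex_eq_iff)
  define c where "c = (cmod (q + b) / cmod (p + b)) powr (2 * s)"
  have c: "0 < c" unfolding c_def using pb qb by simp
  have "psi s (1 / (p + b)) (1 / (q + b)) \<le> psi s p q / c"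
  proof (rule psi_least)
    fix u assume u: "u \<in> Ddisk"
    have ub1: "1 \<le> Re (u + b)" using b Ddisk_Re[OF u] by simp
    then have ub: "u + b \<noteq> 0" "1 \<le> Re (u + b)" by (auto simp: complex_eq_iff)
    have "1 \<le> Re (u + q + b)" using b Ddisk_Re[OF u] Ddisk_Re[OF q] by simp
    then have "u + q + b \<noteq> 0" by (auto simp: complex_eq_iff)
    have "1 \<le> Re (u + p + b)" using b Ddisk_Re[OF u] Ddisk_Re[OF p] by simp
    then have "u + p + b \<noteq> 0" by (auto simp: complex_eq_iff)
    have tu: "1 / (u + b) \<in> Ddisk" by (rule inv_Ddisk[OF ub(2)])
    have e1: "(cmod (q + b) / cmod (p + b)) * (cmod (1 + u * (1 / (q + b))) / cmod (1 + u * (1 / (p + b))))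
        = cmod (1 + 1 / (u + b) * q) / cmod (1 + 1 / (u + b) * p)"
    proof -
      have "1 + u * (1 / (q + b)) = (u + q + b) / (q + b)" using qb by (simp add: field_simps)
      moreover have "1 + u * (1 / (p + b)) = (u + p + b) / (p + b)" using pb by (simp add: field_simps)
      moreover have "1 + 1 / (u + b) * q = (u + q + b) / (u + b)" using ub by (simp add: field_simps)
      moreover have "1 + 1 / (u + b) * p = (u + p + b) / (u + b)" using ub by (simp add: field_simps)
      ultimately show ?thesis using pb qb ub by (simp add: norm_divide field_simps)
    qed
    have "c * (cmod (1 + u * (1 / (q + b))) / cmod (1 + u * (1 / (p + b)))) powr (2 * s)
        = (cmod (1 + 1 / (u + b) * q) / cmod (1 + 1 / (u + b) * p)) powr (2 * s)"
      unfolding c_def e1[symmetric] by (subst powr_mult) auto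
    also have "\<dots> \<le> psi s p q" by (rule psi_upper[OF p q tu s])
    finally show "(cmod (1 + u * (1 / (q + b))) / cmod (1 + u * (1 / (p + b)))) powr (2 * s) \<le> psi s p q / c"
      using c by (simp add: field_simps mult.commute)
  qed
  then show ?thesis using c unfolding c_def[symmetric] by (simp add: field_simps mult.commute)
qed

lemma contraction2:
  assumes b: "1 \<le> Re b" and c: "1 \<le> Re c" and p: "p \<in> Ddisk" and q: "q \<in> Ddisk"
  shows "cmod (1 / (1 / (p + c) + b) - 1 / (1 / (q + c) + b)) \<le> cmod (p - q) / 4"
proof -
  have key: "2 \<le> cmod (x + c) * cmod (1 / (x + c) + b)" if x: "x \<in> Ddisk" for x
  proof -
    define w where "w = x + c"
    have w1: "1 \<le> Re w" unfolding w_def using Ddisk_Re[OF x] c by simp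
    have w0: "w \<noteq> 0" using w1 by auto
    define t where "t = cmod w"
    have t: "1 \<le> t" unfolding t_def using w1 complex_Re_le_cmod[of w] by linarith
    have "Re (1 / w) = Re w / t^2" unfolding t_def by (simp add: Re_divide cmod_power2)
    then have "1 / t^2 \<le> Re (1 / w)" using w1 t by (simp add: divide_right_mono)
    then have "1 + 1 / t^2 \<le> Re (1 / w + b)" using b by simp
    also have "\<dots> \<le> cmod (1 / w + b)" by (rule complex_Re_le_cmod)
    finally have "t * (1 + 1 / t^2) \<le> t * cmod (1 / w + b)" using t by (intro mult_left_mono) auto
    moreover have "2 \<le> t * (1 + 1 / t^2)"
    proof -
      have "t * (1 + 1 / t^2) - 2 = (t - 1)^2 / t" using t by (simp add: field_simps power2_eq_square)
      moreover have "0 \<le> (t - 1)^2 / t" using t by simp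
      ultimately show ?thesis by linarith
    qed
    ultimately show ?thesis unfolding w_def t_def by simp
  qed
  have nz: "x + c \<noteq> 0" "1 / (x + c) + b \<noteq> 0" if x: "x \<in> Ddisk" for x
    using key[OF x] by auto
  have dif: "cmod (1 / (x + d) - 1 / (y + d)) = cmod (x - y) / (cmod (x + d) * cmod (y + d))"
    if "x + d \<noteq> 0" "y + d \<noteq> 0" for x y d :: complex
  proof -
    have "1 / (x + d) - 1 / (y + d) = (y - x) / ((x + d) * (y + d))" using that by (simp add: field_simps)
    then show ?thesis by (simp add: norm_divide norm_mult norm_minus_commute)
  qed
  have "cmod (1 / (1 / (p + c) + b) - 1 / (1 / (q + c) + b))
      = cmod (1 / (p + c) - 1 / (q + c)) / (cmod (1 / (p + c) + b) * cmod (1 / (q + c) + b))"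
    by (rule dif[OF nz(2)[OF p] nz(2)[OF q]])
  also have "cmod (1 / (p + c) - 1 / (q + c)) = cmod (p - q) / (cmod (p + c) * cmod (q + c))"
    by (rule dif[OF nz(1)[OF p] nz(1)[OF q]])
  finally have "cmod (1 / (1 / (p + c) + b) - 1 / (1 / (q + c) + b))
      = cmod (p - q) / ((cmod (p + c) * cmod (1 / (p + c) + b)) * (cmod (q + c) * cmod (1 / (q + c) + b)))"
    by (simp add: field_simps)
  also have "\<dots> \<le> cmod (p - q) / (2 * 2)"
    using key[OF p] key[OF q] by (intro divide_left_mono mult_mono) auto
  finally show ?thesis by simp
qed



context
  fixes s :: real and B :: "complex set" and v :: "complex \<Rightarrow> real" and lam :: real
  assumes s1: "1 < s" and Bre: "\<And>b. b \<in> B \<Longrightarrow> 1 \<le> Re b" and Bne: "B \<noteq> {}"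
    and summ: "\<And>q. q \<in> Ddisk \<Longrightarrow> (\<lambda>b. 1 / cmod (q + b) powr (2 * s)) summable_on B"
    and cont: "continuous_on Ddisk v" and vpos: "\<And>z. z \<in> Ddisk \<Longrightarrow> 0 < v z"
    and eig: "\<And>z. z \<in> Ddisk \<Longrightarrow> Lop s B v z = lam * v z"
begin

lemma theta_D: "b \<in> B \<Longrightarrow> z \<in> Ddisk \<Longrightarrow> 1 / (z + b) \<in> Ddisk"
  using Bre[of b] Ddisk_Re[of z] by (intro inv_Ddisk) auto

lemma zb_pos: "b \<in> B \<Longrightarrow> z \<in> Ddisk \<Longrightarrow> 0 < cmod (z + b)"
proof -
  assume "b \<in> B" "z \<in> Ddisk"
  then have "1 \<le> Re (z + b)" using Bre[of b] Ddisk_Re[of z] by simp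
  then show ?thesis using complex_Re_le_cmod[of "z + b"] by linarith
qed

lemma v_bounded: obtains M where "\<And>z. z \<in> Ddisk \<Longrightarrow> v z \<le> M"
  using continuous_attains_sup[OF Ddisk_compact _ cont] Ddisk_0 by blast

lemma v_min: obtains m where "0 < m" "\<And>z. z \<in> Ddisk \<Longrightarrow> m \<le> v z"
proof -
  obtain x where "x \<in> Ddisk" "\<And>y. y \<in> Ddisk \<Longrightarrow> v x \<le> v y"
    using continuous_attains_inf[OF Ddisk_compact _ cont] Ddisk_0 by blast
  then show ?thesis using that vpos by blast
qed

lemma term_summable:
  assumes q: "q \<in> Ddisk"
  shows "(\<lambda>b. v (1 / (q + b)) / cmod (q + b) powr (2 * s)) summable_on B"
proof -
  obtain M where M: "\<And>z. z \<in> Ddisk \<Longrightarrow> v z \<le> M" using v_bounded by blast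
  show ?thesis
  proof (rule summable_on_comparison_test[OF summable_on_cmult_right[OF summ[OF q], of M]])
    fix b assume b: "b \<in> B"
    have t: "1 / (q + b) \<in> Ddisk" by (rule theta_D[OF b q])
    show "v (1 / (q + b)) / cmod (q + b) powr (2 * s) \<le> M * (1 / cmod (q + b) powr (2 * s))"
      using M[OF t] zb_pos[OF b q] by (simp add: divide_right_mono)
    show "0 \<le> v (1 / (q + b)) / cmod (q + b) powr (2 * s)"
      using vpos[OF t] by simp
  qed
qed

lemma lam_pos: "0 < lam"
proof -
  obtain b0 where b0: "b0 \<in> B" using Bne by blast
  let ?f = "\<lambda>b. v (1 / (0 + b)) / cmod (0 + b) powr (2 * s)"
  have "?f b0 = infsum ?f {b0}" by simp
  also have "\<dots> \<le> infsum ?f B"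
  proof (rule infsum_mono2)
    show "?f summable_on {b0}" by simp
    show "?f summable_on B" by (rule term_summable[OF Ddisk_0])
    show "{b0} \<subseteq> B" using b0 by simp
    fix b assume "b \<in> B - {b0}"
    then show "0 \<le> ?f b" using vpos[OF theta_D[OF _ Ddisk_0]] by (simp add: less_imp_le)
  qed
  also have "\<dots> = lam * v 0" using eig[OF Ddisk_0] unfolding Lop_def by simp
  finally have "0 < lam * v 0"
    using vpos[OF theta_D[OF b0 Ddisk_0]] zb_pos[OF b0 Ddisk_0] by (smt (verit) divide_pos_pos powr_gt_zero)
  then show ?thesis using vpos[OF Ddisk_0] by (simp add: zero_less_mult_iff)
qed

lemma one_step:
  assumes p: "p \<in> Ddisk" and q: "q \<in> Ddisk" and K: "0 \<le> K"
    and H: "\<And>b. b \<in> B \<Longrightarrow> v (1 / (p + b)) \<le> K * psi s (1 / (p + b)) (1 / (q + b)) * v (1 / (q + b))"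
  shows "v p \<le> K * psi s p q * v q"
proof -
  have s0: "0 < s" using s1 by simp
  have tb: "v (1 / (p + b)) / cmod (p + b) powr (2 * s) \<le> (K * psi s p q) * (v (1 / (q + b)) / cmod (q + b) powr (2 * s))"
    if b: "b \<in> B" for b
  proof -
    have pb: "0 < cmod (p + b)" and qb: "0 < cmod (q + b)" using zb_pos[OF b p] zb_pos[OF b q] .
    define c where "c = (cmod (q + b) / cmod (p + b)) powr (2 * s)"
    have c_eq: "1 / cmod (p + b) powr (2 * s) = c / cmod (q + b) powr (2 * s)"
      unfolding c_def using pb qb by (simp add: powr_divide)
    have inv: "c * psi s (1 / (p + b)) (1 / (q + b)) \<le> psi s p q"
      unfolding c_def by (rule psi_invariant[OF Bre[OF b] p q s0])
    have vq: "0 \<le> v (1 / (q + b))" using vpos[OF theta_D[OF b q]] by simp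
    have "v (1 / (p + b)) / cmod (p + b) powr (2 * s) = v (1 / (p + b)) * (c / cmod (q + b) powr (2 * s))"
      using c_eq by (metis times_divide_eq_right mult_1_right)
    also have "\<dots> \<le> (K * psi s (1 / (p + b)) (1 / (q + b)) * v (1 / (q + b))) * (c / cmod (q + b) powr (2 * s))"
      using H[OF b] by (rule mult_right_mono) (simp add: c_def)
    also have "\<dots> = K * (c * psi s (1 / (p + b)) (1 / (q + b))) * (v (1 / (q + b)) / cmod (q + b) powr (2 * s))"
      by (simp add: field_simps)
    also have "\<dots> \<le> K * psi s p q * (v (1 / (q + b)) / cmod (q + b) powr (2 * s))"
      using inv K vq by (intro mult_right_mono mult_left_mono) auto
    finally show ?thesis by simp
  qed
  have "lam * v p = Lop s B v p" using eig[OF p] by simp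
  also have "\<dots> \<le> (\<Sum>\<^sub>\<infinity>b\<in>B. (K * psi s p q) * (v (1 / (q + b)) / cmod (q + b) powr (2 * s)))"
    unfolding Lop_def
    by (rule infsum_mono[OF term_summable[OF p] summable_on_cmult_right[OF term_summable[OF q]] tb])
  also have "\<dots> = (K * psi s p q) * Lop s B v q" unfolding Lop_def by (rule infsum_cmult_right')
  also have "\<dots> = lam * (K * psi s p q * v q)" using eig[OF q] by simp
  finally show ?thesis using lam_pos by simp
qed

lemma ratio_bound:
  assumes p: "p \<in> Ddisk" and q: "q \<in> Ddisk"
  shows "v p \<le> psi s p q * v q"
proof -
  have s0: "0 < s" using s1 by simp
  have eps: "v p \<le> (1 + e) * psi s p q * v q" if e: "0 < e" for e
  proof -
    obtain m where m: "0 < m" "\<And>z. z \<in> Ddisk \<Longrightarrow> m \<le> v z" using v_min by blast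
    have uc: "uniformly_continuous_on Ddisk v" by (rule compact_uniformly_continuous[OF cont Ddisk_compact])
    obtain d where d: "0 < d" "\<And>x x'. x \<in> Ddisk \<Longrightarrow> x' \<in> Ddisk \<Longrightarrow> dist x' x < d \<Longrightarrow> dist (v x') (v x) < e * m"
      using uc[unfolded uniformly_continuous_on_def, rule_format, of "e * m"] e m by auto
    have base: "v x \<le> (1 + e) * v y" if "x \<in> Ddisk" "y \<in> Ddisk" "cmod (x - y) < d" for x y
    proof -
      have "dist (v x) (v y) < e * m" using d(2)[of y x] that by (simp add: dist_norm)
      then have "v x < v y + e * m" by (simp add: dist_real_def)
      also have "\<dots> \<le> v y + e * v y" using m(2)[OF that(2)] e by simp
      finally show ?thesis by (simp add: algebra_simps)
    qed
    have ind: "\<forall>x\<in>Ddisk. \<forall>y\<in>Ddisk. cmod (x - y) < d * 4 ^ k \<longrightarrow> v x \<le> (1 + e) * psi s x y * v y" for k :: nat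
    proof (induction k)
      case 0
      show ?case
      proof (intro ballI impI)
        fix x y assume xy: "x \<in> Ddisk" "y \<in> Ddisk" "cmod (x - y) < d * 4 ^ 0"
        have "v x \<le> (1 + e) * v y" using base xy by simp
        also have "\<dots> \<le> (1 + e) * psi s x y * v y"
          using psi_ge1[OF xy(1,2) s0] vpos[OF xy(2)] e
          by (simp add: mult_left_le mult.assoc)
        finally show "v x \<le> (1 + e) * psi s x y * v y" .
      qed
    next
      case (Suc k)
      show ?case
      proof (intro ballI impI)
        fix x y assume xy: "x \<in> Ddisk" "y \<in> Ddisk" "cmod (x - y) < d * 4 ^ Suc k"
        have step1: "v (1 / (x + c)) \<le> (1 + e) * psi s (1 / (x + c)) (1 / (y + c)) * v (1 / (y + c))"
          if c: "c \<in> B" for c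
        proof (rule one_step[OF theta_D[OF c xy(1)] theta_D[OF c xy(2)]])
          show "0 \<le> 1 + e" using e by simp
          fix b assume b: "b \<in> B"
          have "cmod (1 / (1 / (x + c) + b) - 1 / (1 / (y + c) + b)) \<le> cmod (x - y) / 4"
            by (rule contraction2[OF Bre[OF b] Bre[OF c] xy(1,2)])
          also have "\<dots> < d * 4 ^ k" using xy(3) by simp
          finally show "v (1 / (1 / (x + c) + b)) \<le> (1 + e) * psi s (1 / (1 / (x + c) + b)) (1 / (1 / (y + c) + b)) * v (1 / (1 / (y + c) + b))"
            using Suc.IH theta_D[OF b theta_D[OF c xy(1)]] theta_D[OF b theta_D[OF c xy(2)]] by blast
        qed
        show "v x \<le> (1 + e) * psi s x y * v y"
          by (rule one_step[OF xy(1,2)]) (use e step1 in auto)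
      qed
    qed
    obtain k :: nat where k: "1 / d < 4 ^ k" using real_arch_pow[of 4 "1 / d"] by auto
    have "cmod (p - q) < d * 4 ^ k"
    proof -
      have "cmod (p - q) \<le> 1" by (rule Ddisk_diam[OF p q])
      also have "1 < d * 4 ^ k" using k d(1) by (simp add: field_simps)
      finally show ?thesis .
    qed
    then show ?thesis using ind[of k] p q by blast
  qed
  show ?thesis
  proof (rule field_le_epsilon)
    fix e :: real assume e: "0 < e"
    have pos: "0 < psi s p q * v q" using psi_ge1[OF p q s0] vpos[OF q] by simp
    have "v p \<le> (1 + e / (psi s p q * v q)) * psi s p q * v q" using eps[of "e / (psi s p q * v q)"] e pos by simp
    also have "\<dots> = (1 + e / (psi s p q * v q)) * (psi s p q * v q)" by (simp add: mult.assoc)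
    also have "\<dots> = psi s p q * v q + e" using pos vpos[OF q] psi_ge1[OF p q s0] by (simp add: distrib_right)
    finally show "v p \<le> psi s p q * v q + e" .
  qed
qed

lemma v_exp_bound:
  assumes w: "w \<in> Ddisk"
  shows "v w \<le> exp (2 * s * cmod w) * v 0"
proof -
  have "v w \<le> psi s w 0 * v 0" by (rule ratio_bound[OF w Ddisk_0])
  also have "\<dots> \<le> exp (2 * s * cmod w) * v 0"
    using psi_zero[OF w] s1 vpos[OF Ddisk_0] by (intro mult_right_mono) auto
  finally show ?thesis .
qed

end



lemma key_estimate:
  assumes s: "1 < s" and R: "1 < R" and z: "z \<in> Ddisk" and b: "1 \<le> Re b" and bR: "R < cmod b"
  shows "1 / cmod (z + b) powr (2 * s) \<le> (R / (R - 1)) powr s * cmod b powr (- (2 * s))"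
    "sqrt (R^2 - R) \<le> cmod (z + b)"
proof -
  define X where "X = cmod b"
  define Y where "Y = cmod (z + b)"
  have X1: "1 < X" "R < X" using R bR unfolding X_def by auto
  have XY: "X^2 - X \<le> Y^2" unfolding X_def Y_def using norm_plus_b_sq[OF z] b by simp
  have RX: "R^2 - R \<le> X^2 - X"
  proof -
    have "X^2 - X - (R^2 - R) = (X - R) * (X + R - 1)" by (simp add: power2_eq_square algebra_simps)
    moreover have "0 \<le> (X - R) * (X + R - 1)" using X1 R by simp
    ultimately show ?thesis by linarith
  qed
  have RR: "0 < R^2 - R" using R by (simp add: power2_eq_square)
  have Ypos: "0 < Y^2" using RX XY RR by linarith
  have Y0: "0 \<le> Y" unfolding Y_def by simp
  show "sqrt (R^2 - R) \<le> cmod (z + b)"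
  proof -
    have "sqrt (R^2 - R) \<le> sqrt (Y^2)" using RX XY by (simp only: real_sqrt_le_iff)
    then show ?thesis using Y0 unfolding Y_def by simp
  qed
  have Yp: "0 < Y" using Ypos Y0 by (metis less_eq_real_def power_zero_numeral zero_less_power2)
  have "1 / Y powr (2 * s) = (Y^2) powr (- s)"
  proof -
    have "Y^2 = Y powr 2" using Yp by (simp add: powr_realpow)
    then have "(Y^2) powr (- s) = Y powr (2 * (- s))" by (simp only: powr_powr)
    then show ?thesis by (simp add: powr_minus_divide)
  qed
  also have "\<dots> \<le> (X^2 - X) powr (- s)"
    using XY RX RR s by (auto intro!: powr_mono2')
  also have "(X^2 - X) = X^2 * ((X - 1) / X)" using X1 by (simp add: field_simps power2_eq_square)
  also have "(X^2 * ((X - 1) / X)) powr (- s) = (X^2) powr (- s) * ((X - 1) / X) powr (- s)"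
    by (rule powr_mult; use X1 in auto)
  also have "(X^2) powr (- s) = X powr (- (2 * s))"
  proof -
    have "X^2 = X powr 2" using X1 by (simp add: powr_realpow)
    then have "(X^2) powr (- s) = X powr (2 * (- s))" by (simp only: powr_powr)
    then show ?thesis by simp
  qed
  also have "((X - 1) / X) powr (- s) = (X / (X - 1)) powr s"
    using X1 by (simp add: powr_minus_divide powr_divide)
  also have "X powr (- (2 * s)) * (X / (X - 1)) powr s \<le> X powr (- (2 * s)) * (R / (R - 1)) powr s"
  proof (rule mult_left_mono)
    have "X / (X - 1) \<le> R / (R - 1)" using X1 R by (simp add: field_simps)
    then show "(X / (X - 1)) powr s \<le> (R / (R - 1)) powr s" using X1 s by (intro powr_mono2) auto
  qed simp
  finally show "1 / cmod (z + b) powr (2 * s) \<le> (R / (R - 1)) powr s * cmod b powr (- (2 * s))"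
    unfolding X_def Y_def by (simp add: mult.commute)
qed

lemma I1_mem: "b \<in> I1 \<longleftrightarrow> (\<exists>m::nat. \<exists>n::int. 1 \<le> m \<and> b = Complex (real m) (real_of_int n))"
proof -
  have "of_nat m + of_int n * \<i> = Complex (real m) (real_of_int n)" for m :: nat and n :: int
    by (simp add: complex_eq_iff)
  then show ?thesis unfolding I1_def by auto
qed

lemma I2_mem: "b \<in> I2 \<longleftrightarrow> (\<exists>m::nat. \<exists>n::nat. 1 \<le> m \<and> b = Complex (real m) (real n))"
proof -
  have "of_nat m + of_nat n * \<i> = Complex (real m) (real n)" for m n :: nat
    by (simp add: complex_eq_iff)
  then show ?thesis unfolding I2_def by auto
qed

lemma I1_Re: "b \<in> I1 \<Longrightarrow> 1 \<le> Re b" unfolding I1_mem by auto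
lemma I2_Re: "b \<in> I2 \<Longrightarrow> 1 \<le> Re b" unfolding I2_mem by auto
lemma I1_ne: "I1 \<noteq> {}" using I1_mem[of "Complex 1 0"] by (metis empty_iff of_int_0 of_nat_1 order_refl)
lemma I2_ne: "I2 \<noteq> {}" using I2_mem[of "Complex 1 0"] by (metis empty_iff of_nat_0 of_nat_1 order_refl)
lemma I2_sub: "I2 \<subseteq> I1"
proof
  fix b assume "b \<in> I2"
  then obtain m n :: nat where "1 \<le> m" "b = Complex (real m) (real n)" unfolding I2_mem by auto
  then show "b \<in> I1" unfolding I1_mem by (intro exI[of _ m] exI[of _ "int n"]) simp
qed

lemma I1_finite: "finite {b\<in>I1. cmod b \<le> r}"
proof -
  let ?N = "nat \<lceil>r\<rceil>"
  have "{b\<in>I1. cmod b \<le> r} \<subseteq> (\<lambda>(m,n). Complex (real m) (real_of_int n)) ` ({0..?N} \<times> {-int ?N..int ?N})"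
  proof
    fix b assume b: "b \<in> {b\<in>I1. cmod b \<le> r}"
    then obtain m :: nat and n :: int where mn: "b = Complex (real m) (real_of_int n)" and br: "cmod b \<le> r"
      unfolding I1_mem by auto
    have "real m \<le> cmod b" using abs_Re_le_cmod[of b] mn by simp
    then have "m \<le> ?N" using br by linarith
    moreover have "\<bar>real_of_int n\<bar> \<le> cmod b" using abs_Im_le_cmod[of b] mn by simp
    then have "n \<in> {-int ?N..int ?N}" using br by auto linarith+
    ultimately show "b \<in> (\<lambda>(m,n). Complex (real m) (real_of_int n)) ` ({0..?N} \<times> {-int ?N..int ?N})"
      using mn by force
  qed
  then show ?thesis by (rule finite_subset) auto
qed

lemma I2_finite: "finite {b\<in>I2. cmod b \<le> r}"
  by (rule finite_subset[OF _ I1_finite[of r]]) (use I2_sub in auto)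

lemma I1_decomp: "{b\<in>I1. R < cmod b} = Axis R \<union> (Quad R \<union> cnj ` Quad R)"
proof (intro equalityI subsetI)
  fix b assume "b \<in> {b\<in>I1. R < cmod b}"
  then obtain m :: nat and n :: int where mn: "1 \<le> m" "b = Complex (real m) (real_of_int n)" and bR: "R < cmod b"
    unfolding I1_mem by auto
  consider "n = 0" | "n > 0" | "n < 0" by linarith
  then show "b \<in> Axis R \<union> (Quad R \<union> cnj ` Quad R)"
  proof cases
    case 1 then show ?thesis using mn bR unfolding Axis_def by auto
  next
    case 2
    then have "b = Complex (real m) (real (nat n))" using mn by simp
    then have "b \<in> Quad R" unfolding Quad_def using mn bR 2
      by (intro CollectI exI[of _ m] exI[of _ "nat n"]) auto
    then show ?thesis by simp
  next
    case 3
    then have "b = cnj (Complex (real m) (real (nat (- n))))" using mn by (simp add: complex_eq_iff)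
    moreover have "Complex (real m) (real (nat (- n))) \<in> Quad R"
    proof -
      have "cmod (Complex (real m) (real (nat (- n)))) = cmod b"
        using \<open>b = cnj _\<close> by simp
      then show ?thesis unfolding Quad_def using mn bR 3
        by (intro CollectI exI[of _ m] exI[of _ "nat (-n)"]) auto
    qed
    ultimately show ?thesis by blast
  qed
next
  fix b assume b: "b \<in> Axis R \<union> (Quad R \<union> cnj ` Quad R)"
  show "b \<in> {b\<in>I1. R < cmod b}"
  proof (cases "b \<in> Axis R")
    case True
    then obtain m :: nat where "1 \<le> m" "b = Complex (real m) 0" "R < cmod b" unfolding Axis_def by auto
    then show ?thesis unfolding I1_mem by (auto intro!: exI[of _ m] exI[of _ "0::int"])
  next
    case False
    then consider "b \<in> Quad R" | "b \<in> cnj ` Quad R" using b by blast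
    then show ?thesis
    proof cases
      case 1
      then obtain m n :: nat where "1 \<le> m" "b = Complex (real m) (real n)" "R < cmod b" unfolding Quad_def by auto
      then show ?thesis unfolding I1_mem by (auto intro!: exI[of _ m] exI[of _ "int n"])
    next
      case 2
      then obtain c where c: "c \<in> Quad R" "b = cnj c" by blast
      then obtain m n :: nat where mn: "1 \<le> m" "c = Complex (real m) (real n)" "R < cmod c" unfolding Quad_def by auto
      have "R < cmod b" using c mn by simp
      moreover have "b = Complex (real m) (real_of_int (- int n))" using c mn by (simp add: complex_eq_iff)
      ultimately show ?thesis unfolding I1_mem using mn by blast
    qed
  qed
qed

lemma I2_decomp: "{b\<in>I2. R < cmod b} = Axis R \<union> Quad R"
proof (intro equalityI subsetI)
  fix b assume "b \<in> {b\<in>I2. R < cmod b}"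
  then obtain m n :: nat where mn: "1 \<le> m" "b = Complex (real m) (real n)" and bR: "R < cmod b"
    unfolding I2_mem by auto
  show "b \<in> Axis R \<union> Quad R"
  proof (cases "n = 0")
    case True then show ?thesis using mn bR unfolding Axis_def by auto
  next
    case False then show ?thesis using mn bR unfolding Quad_def by auto
  qed
next
  fix b assume b: "b \<in> Axis R \<union> Quad R"
  then show "b \<in> {b\<in>I2. R < cmod b}"
  proof
    assume "b \<in> Axis R"
    then obtain m :: nat where "1 \<le> m" "b = Complex (real m) 0" "R < cmod b" unfolding Axis_def by auto
    then show ?thesis unfolding I2_mem by (auto intro!: exI[of _ m] exI[of _ "0::nat"])
  next
    assume "b \<in> Quad R"
    then obtain m n :: nat where "1 \<le> m" "b = Complex (real m) (real n)" "R < cmod b" unfolding Quad_def by auto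
    then show ?thesis unfolding I2_mem by (auto intro!: exI[of _ m] exI[of _ n])
  qed
qed

lemma Axis_Im: "b \<in> Axis R \<Longrightarrow> Im b = 0" unfolding Axis_def by auto
lemma Quad_Im: "b \<in> Quad R \<Longrightarrow> 1 \<le> Im b" unfolding Quad_def by auto

lemma h_cnj_quad:
  assumes R: "sqrt 2 < R" and s: "1 < s"
  shows "(\<lambda>b. cmod b powr (- (2 * s))) summable_on cnj ` Quad R"
    "(\<Sum>\<^sub>\<infinity>b\<in>cnj ` Quad R. cmod b powr (- (2 * s))) \<le> pi / 4 * (1 / (s - 1)) * (1 / (R - sqrt 2)) powr (2 * s - 2)"
proof -
  have inj: "inj_on cnj (Quad R)" by (meson complex_cnj_cancel_iff inj_onI)
  have eq: "(\<lambda>b. cmod b powr (- (2 * s))) \<circ> cnj = (\<lambda>b. cmod b powr (- (2 * s)))" by (auto simp: o_def)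
  show "(\<lambda>b. cmod b powr (- (2 * s))) summable_on cnj ` Quad R"
    unfolding summable_on_reindex[OF inj] eq by (rule quad_sum(1)[OF R s])
  show "(\<Sum>\<^sub>\<infinity>b\<in>cnj ` Quad R. cmod b powr (- (2 * s))) \<le> pi / 4 * (1 / (s - 1)) * (1 / (R - sqrt 2)) powr (2 * s - 2)"
    unfolding infsum_reindex[OF inj] eq by (rule quad_sum(2)[OF R s])
qed

lemma I1_hsum:
  assumes R: "sqrt 2 < R" and s: "1 < s"
  shows "(\<lambda>b. cmod b powr (- (2 * s))) summable_on {b\<in>I1. R < cmod b}"
    "(\<Sum>\<^sub>\<infinity>b\<in>{b\<in>I1. R < cmod b}. cmod b powr (- (2 * s)))
      \<le> 1 / (2 * s - 1) * (1 / (R - 1)) powr (2 * s - 1) + pi / 2 * (1 / (s - 1)) * (1 / (R - sqrt 2)) powr (2 * s - 2)"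
proof -
  have R1: "1 < R" using R by (smt (verit) real_sqrt_ge_one)
  let ?h = "\<lambda>b. cmod b powr (- (2 * s))"
  have d1: "Quad R \<inter> cnj ` Quad R = {}"
  proof (intro equals0I)
    fix x assume "x \<in> Quad R \<inter> cnj ` Quad R"
    then obtain y where "x \<in> Quad R" "y \<in> Quad R" "x = cnj y" by auto
    then show False using Quad_Im[of x R] Quad_Im[of y R] by simp
  qed
  have d2: "Axis R \<inter> (Quad R \<union> cnj ` Quad R) = {}"
  proof (intro equals0I)
    fix x assume x: "x \<in> Axis R \<inter> (Quad R \<union> cnj ` Quad R)"
    then have "Im x = 0" using Axis_Im by auto
    moreover have "x \<in> Quad R \<or> (\<exists>y\<in>Quad R. x = cnj y)" using x by auto
    ultimately show False using Quad_Im[of x R] Quad_Im[of _ R] by force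
  qed
  have sQ: "?h summable_on (Quad R \<union> cnj ` Quad R)"
    by (rule summable_on_Un_disjoint[OF quad_sum(1)[OF R s] h_cnj_quad(1)[OF R s] d1])
  show "?h summable_on {b\<in>I1. R < cmod b}"
    unfolding I1_decomp by (rule summable_on_Un_disjoint[OF axis_sum(1)[OF R1 s] sQ d2])
  have "infsum ?h {b\<in>I1. R < cmod b} = infsum ?h (Axis R) + (infsum ?h (Quad R) + infsum ?h (cnj ` Quad R))"
    unfolding I1_decomp
    by (simp add: infsum_Un_disjoint[OF axis_sum(1)[OF R1 s] sQ d2]
        infsum_Un_disjoint[OF quad_sum(1)[OF R s] h_cnj_quad(1)[OF R s] d1])
  also have "\<dots> \<le> 1 / (2 * s - 1) * (1 / (R - 1)) powr (2 * s - 1) +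
      (pi / 4 * (1 / (s - 1)) * (1 / (R - sqrt 2)) powr (2 * s - 2) + pi / 4 * (1 / (s - 1)) * (1 / (R - sqrt 2)) powr (2 * s - 2))"
    using axis_sum(2)[OF R1 s] quad_sum(2)[OF R s] h_cnj_quad(2)[OF R s] by linarith
  moreover have "pi / 4 * (1 / (s - 1)) * (1 / (R - sqrt 2)) powr (2 * s - 2) + pi / 4 * (1 / (s - 1)) * (1 / (R - sqrt 2)) powr (2 * s - 2)
      = pi / 2 * (1 / (s - 1)) * (1 / (R - sqrt 2)) powr (2 * s - 2)"
  proof -
    have "pi / 4 * x + pi / 4 * x = pi / 2 * x" for x :: real by simp
    then show ?thesis by (simp only: mult.assoc)
  qed
  ultimately show "infsum ?h {b\<in>I1. R < cmod b}
      \<le> 1 / (2 * s - 1) * (1 / (R - 1)) powr (2 * s - 1) + pi / 2 * (1 / (s - 1)) * (1 / (R - sqrt 2)) powr (2 * s - 2)"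
    by linarith
qed

lemma I2_hsum:
  assumes R: "sqrt 2 < R" and s: "1 < s"
  shows "(\<lambda>b. cmod b powr (- (2 * s))) summable_on {b\<in>I2. R < cmod b}"
    "(\<Sum>\<^sub>\<infinity>b\<in>{b\<in>I2. R < cmod b}. cmod b powr (- (2 * s)))
      \<le> 1 / (2 * s - 1) * (1 / (R - 1)) powr (2 * s - 1) + pi / 4 * (1 / (s - 1)) * (1 / (R - sqrt 2)) powr (2 * s - 2)"
proof -
  have R1: "1 < R" using R by (smt (verit) real_sqrt_ge_one)
  let ?h = "\<lambda>b. cmod b powr (- (2 * s))"
  have d2: "Axis R \<inter> Quad R = {}"
  proof (intro equals0I)
    fix x assume x: "x \<in> Axis R \<inter> Quad R"
    then show False using Quad_Im[of x R] Axis_Im[of x R] by simp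
  qed
  show "?h summable_on {b\<in>I2. R < cmod b}"
    unfolding I2_decomp by (rule summable_on_Un_disjoint[OF axis_sum(1)[OF R1 s] quad_sum(1)[OF R s] d2])
  have "infsum ?h {b\<in>I2. R < cmod b} = infsum ?h (Axis R) + infsum ?h (Quad R)"
    unfolding I2_decomp by (rule infsum_Un_disjoint[OF axis_sum(1)[OF R1 s] quad_sum(1)[OF R s] d2])
  then show "infsum ?h {b\<in>I2. R < cmod b}
      \<le> 1 / (2 * s - 1) * (1 / (R - 1)) powr (2 * s - 1) + pi / 4 * (1 / (s - 1)) * (1 / (R - sqrt 2)) powr (2 * s - 2)"
    using axis_sum(2)[OF R1 s] quad_sum(2)[OF R s] by linarith
qed

lemma summ_from_h:
  assumes s: "1 < s" and Bre: "\<And>b. b \<in> B \<Longrightarrow> 1 \<le> Re b" and fin: "finite {b\<in>B. cmod b \<le> 2}"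
    and hs: "(\<lambda>b. cmod b powr (- (2 * s))) summable_on {b\<in>B. 2 < cmod b}" and q: "q \<in> Ddisk"
  shows "(\<lambda>b. 1 / cmod (q + b) powr (2 * s)) summable_on B"
proof -
  have "(\<lambda>b. 1 / cmod (q + b) powr (2 * s)) summable_on {b\<in>B. 2 < cmod b}"
  proof (rule summable_on_comparison_test[OF summable_on_cmult_right[OF hs, of "(2 / (2 - 1)) powr s"]])
    fix b assume b: "b \<in> {b\<in>B. 2 < cmod b}"
    show "1 / cmod (q + b) powr (2 * s) \<le> (2 / (2 - 1)) powr s * cmod b powr (- (2 * s))"
      using key_estimate(1)[of s 2 q b] s q Bre[of b] b by auto
    show "0 \<le> 1 / cmod (q + b) powr (2 * s)" by simp
  qed
  moreover have "(\<lambda>b. 1 / cmod (q + b) powr (2 * s)) summable_on {b\<in>B. cmod b \<le> 2}"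
    by (rule summable_on_finite[OF fin])
  ultimately have "(\<lambda>b. 1 / cmod (q + b) powr (2 * s)) summable_on ({b\<in>B. cmod b \<le> 2} \<union> {b\<in>B. 2 < cmod b})"
    by (intro summable_on_union)
  moreover have "{b\<in>B. cmod b \<le> 2} \<union> {b\<in>B. 2 < cmod b} = B" by auto
  ultimately show ?thesis by simp
qed

lemma final_general:
  assumes s: "1 < s" and R: "sqrt 2 < R"
    and Bre: "\<And>b. b \<in> B \<Longrightarrow> 1 \<le> Re b" and Bne: "B \<noteq> {}"
    and summ: "\<And>q. q \<in> Ddisk \<Longrightarrow> (\<lambda>b. 1 / cmod (q + b) powr (2 * s)) summable_on B"
    and hs: "(\<lambda>b. cmod b powr (- (2 * s))) summable_on {b\<in>B. R < cmod b}"
    and hb: "(\<Sum>\<^sub>\<infinity>b\<in>{b\<in>B. R < cmod b}. cmod b powr (- (2 * s))) \<le> Bd"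
    and ev: "pos_eigvec s B v" and z: "z \<in> Ddisk"
  shows "(\<Sum>\<^sub>\<infinity> b\<in>{b\<in>B. cmod b > R}. v (1 / (z + b)) / cmod (z + b) powr (2 * s))
          \<le> exp (2 * s / sqrt (R\<^sup>2 - R)) * (R / (R - 1)) powr s * Bd * v 0"
proof -
  have R1: "1 < R" using R by (smt (verit) real_sqrt_ge_one)
  have cont: "continuous_on Ddisk v" and vpos: "\<And>z. z \<in> Ddisk \<Longrightarrow> 0 < v z"
    and eig: "\<And>z. z \<in> Ddisk \<Longrightarrow> Lop s B v z = spec_rad s B * v z"
    using ev unfolding pos_eigvec_def by auto
  define K where "K = exp (2 * s / sqrt (R\<^sup>2 - R)) * (R / (R - 1)) powr s * v 0"
  have RR: "0 < R^2 - R" using R1 by (simp add: power2_eq_square)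
  have tb: "v (1 / (z + b)) / cmod (z + b) powr (2 * s) \<le> K * cmod b powr (- (2 * s))"
    if b: "b \<in> {b\<in>B. R < cmod b}" for b
  proof -
    have bre: "1 \<le> Re b" and bR: "R < cmod b" using b Bre by auto
    have zb1: "1 \<le> Re (z + b)" using bre Ddisk_Re[OF z] by simp
    then have zbD: "1 / (z + b) \<in> Ddisk" by (rule inv_Ddisk)
    have e1: "1 / cmod (z + b) powr (2 * s) \<le> (R / (R - 1)) powr s * cmod b powr (- (2 * s))"
      and e2: "sqrt (R^2 - R) \<le> cmod (z + b)" using key_estimate[OF s R1 z bre bR] by auto
    have sq: "0 < sqrt (R^2 - R)" using RR by simp
    have "cmod (1 / (z + b)) \<le> 1 / sqrt (R^2 - R)"
      using e2 sq by (simp add: norm_divide frac_le)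
    then have "exp (2 * s * cmod (1 / (z + b))) \<le> exp (2 * s / sqrt (R\<^sup>2 - R))"
      using s by (simp add: divide_inverse mult_left_mono)
    then have v1: "v (1 / (z + b)) \<le> exp (2 * s / sqrt (R\<^sup>2 - R)) * v 0"
    proof -
      have "v (1 / (z + b)) \<le> exp (2 * s * cmod (1 / (z + b))) * v 0"
        by (rule v_exp_bound[of s B v "spec_rad s B"]) (use s Bre Bne summ cont vpos eig zbD in auto)
      also have "\<dots> \<le> exp (2 * s / sqrt (R\<^sup>2 - R)) * v 0"
        using \<open>exp (2 * s * cmod (1 / (z + b))) \<le> exp (2 * s / sqrt (R\<^sup>2 - R))\<close> vpos[OF Ddisk_0]
        by (intro mult_right_mono) auto
      finally show ?thesis .
    qed
    have "v (1 / (z + b)) / cmod (z + b) powr (2 * s) = v (1 / (z + b)) * (1 / cmod (z + b) powr (2 * s))" by simp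
    also have "\<dots> \<le> (exp (2 * s / sqrt (R\<^sup>2 - R)) * v 0) * ((R / (R - 1)) powr s * cmod b powr (- (2 * s)))"
      using v1 e1 vpos[OF zbD] by (intro mult_mono) auto
    also have "\<dots> = K * cmod b powr (- (2 * s))" unfolding K_def by (simp add: mult_ac)
    finally show ?thesis .
  qed
  have K0: "0 \<le> K" unfolding K_def using vpos[OF Ddisk_0] by simp
  have ts: "(\<lambda>b. v (1 / (z + b)) / cmod (z + b) powr (2 * s)) summable_on {b\<in>B. R < cmod b}"
  proof (rule summable_on_comparison_test[OF summable_on_cmult_right[OF hs, of K] tb])
    fix b assume b: "b \<in> {b\<in>B. R < cmod b}"
    have "1 \<le> Re (z + b)" using b Bre Ddisk_Re[OF z] by (simp add: add_increasing)
    then have "1 / (z + b) \<in> Ddisk" by (rule inv_Ddisk)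
    then show "0 \<le> v (1 / (z + b)) / cmod (z + b) powr (2 * s)" using vpos by (simp add: less_imp_le)
  qed
  have "(\<Sum>\<^sub>\<infinity> b\<in>{b\<in>B. cmod b > R}. v (1 / (z + b)) / cmod (z + b) powr (2 * s))
      \<le> (\<Sum>\<^sub>\<infinity> b\<in>{b\<in>B. cmod b > R}. K * cmod b powr (- (2 * s)))"
    by (rule infsum_mono[OF ts summable_on_cmult_right[OF hs] tb]) auto
  also have "\<dots> = K * (\<Sum>\<^sub>\<infinity> b\<in>{b\<in>B. cmod b > R}. cmod b powr (- (2 * s)))"
    by (rule infsum_cmult_right')
  also have "\<dots> \<le> K * Bd" using hb K0 by (intro mult_left_mono) auto
  finally show ?thesis unfolding K_def by (simp add: mult_ac)
qed

theorem lemma4p3: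
  fixes s R :: real and v1 v2 :: "complex \<Rightarrow> real"
  assumes "s > 1" and "R > sqrt 2"
  shows "(pos_eigvec s I1 v1 \<longrightarrow> (\<forall>z\<in>Ddisk.
            (\<Sum>\<^sub>\<infinity> b\<in>{b\<in>I1. cmod b > R}. v1 (1 / (z + b)) / cmod (z + b) powr (2 * s))
          \<le> exp (2 * s / sqrt (R\<^sup>2 - R)) * (R / (R - 1)) powr s *
             (1 / (2 * s - 1) * (1 / (R - 1)) powr (2 * s - 1)
              + pi / 2 * (1 / (s - 1)) * (1 / (R - sqrt 2)) powr (2 * s - 2)) * v1 0))
       \<and> (pos_eigvec s I2 v2 \<longrightarrow> (\<forall>z\<in>Ddisk.
            (\<Sum>\<^sub>\<infinity> b\<in>{b\<in>I2. cmod b > R}. v2 (1 / (z + b)) / cmod (z + b) powr (2 * s))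
          \<le> exp (2 * s / sqrt (R\<^sup>2 - R)) * (R / (R - 1)) powr s *
             (1 / (2 * s - 1) * (1 / (R - 1)) powr (2 * s - 1)
              + pi / 4 * (1 / (s - 1)) * (1 / (R - sqrt 2)) powr (2 * s - 2)) * v2 0))"
proof -
  have s: "1 < s" and R: "sqrt 2 < R" using assms by auto
  have s2: "sqrt 2 < (2::real)"
  proof -
    have "sqrt 2 < sqrt (4::real)" by (rule real_sqrt_less_mono) simp
    also have "sqrt (4::real) = 2" by (metis real_sqrt_abs abs_numeral power2_eq_square numeral_times_numeral semiring_norm(12) semiring_norm(13))
    finally show ?thesis .
  qed
  have summ1: "\<And>q. q \<in> Ddisk \<Longrightarrow> (\<lambda>b. 1 / cmod (q + b) powr (2 * s)) summable_on I1"
    using summ_from_h[OF s I1_Re I1_finite I1_hsum(1)[OF s2 s]] by blast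
  have summ2: "\<And>q. q \<in> Ddisk \<Longrightarrow> (\<lambda>b. 1 / cmod (q + b) powr (2 * s)) summable_on I2"
    using summ_from_h[OF s I2_Re I2_finite I2_hsum(1)[OF s2 s]] by blast
  show ?thesis
  proof (intro conjI impI ballI)
    fix z assume "pos_eigvec s I1 v1" "z \<in> Ddisk"
    then show "(\<Sum>\<^sub>\<infinity> b\<in>{b\<in>I1. cmod b > R}. v1 (1 / (z + b)) / cmod (z + b) powr (2 * s))
          \<le> exp (2 * s / sqrt (R\<^sup>2 - R)) * (R / (R - 1)) powr s *
             (1 / (2 * s - 1) * (1 / (R - 1)) powr (2 * s - 1)
              + pi / 2 * (1 / (s - 1)) * (1 / (R - sqrt 2)) powr (2 * s - 2)) * v1 0"
      using final_general[OF s R I1_Re I1_ne summ1 I1_hsum[OF R s]] by blast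
  next
    fix z assume "pos_eigvec s I2 v2" "z \<in> Ddisk"
    then show "(\<Sum>\<^sub>\<infinity> b\<in>{b\<in>I2. cmod b > R}. v2 (1 / (z + b)) / cmod (z + b) powr (2 * s))
          \<le> exp (2 * s / sqrt (R\<^sup>2 - R)) * (R / (R - 1)) powr s *
             (1 / (2 * s - 1) * (1 / (R - 1)) powr (2 * s - 1)
              + pi / 4 * (1 / (s - 1)) * (1 / (R - sqrt 2)) powr (2 * s - 2)) * v2 0"
      using final_general[OF s R I2_Re I2_ne summ2 I2_hsum[OF R s]] by blast
  qed
qed

end
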